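(* Under the standing assumptions, let $\vec v$ be a demand vector, let $(\vec v,\vec v_1)$ be an $(s,t_1)$-adjacent pair with switching cost $2$ and intermediate task $i_1$, and let $(\vec v,\vec v_2)$ be an $(s,t_2)$-adjacent pair with switching cost $2$ and intermediate task $i_2$. Then the tasks $s,i_1,t_1,i_2,t_2$ are not all distinct.
   Context: Standing assumptions: $n\ge 4$, $k\ge 5$, and $f_1,\dots,f_n$ are functions from demand vectors to $[k]$ satisfying the demand (for every demand vector $\vec v$ and task $j$, exactly $v_j$ agents $a$ have $f_a(\vec v)=j$), with maximum switching cost at most $2$. A demand vector is $\vec v=(v_1,\dots,v_k)$ of non-negative integers with $\sum v_j=n$. The switching cost of $(\vec v,\vec v')$ is the number of agents $a$ with $f_a(\vec v)\ne f_a(\vec v')$; $\vec v,\vec v'$ are adjacent if $\|\vec v-\vec v'\|_1=2$. An ordered pair $(\vec v_1,\vec v_2)$ is $(s,t)$-adjacent if $s\ne t$ and $\vec v_2$ is obtained from $\vec v_1$ by moving one unit of demand from task $s$ to task $t$. Agent $a$ is $(i,j)$-mobile with respect to $(\vec v_1,\vec v_2)$ if $f_a(\vec v_1)=i$, $f_a(\vec v_2)=j$, $i\ne j$. If $(\vec v_1,\vec v_2)$ is $(s,t)$-adjacent with switching cost $2$, then there is a task $i\notin\{s,t\}$ such that one switching agent is $(s,i)$-mobile and the other is $(i,t)$-mobile; $i$ is called the intermediate task of $(\vec v_1,\vec v_2)$. *)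

theory Defs
  imports Main
begin

definition demand_vec :: "nat \<Rightarrow> nat \<Rightarrow> (nat \<Rightarrow> nat) \<Rightarrow> bool" where
  "demand_vec n k v \<longleftrightarrow> (\<forall>j. j \<notin> {1..k} \<longrightarrow> v j = 0) \<and> (\<Sum>j\<in>{1..k}. v j) = n"

text \<open>f a v is the task assigned to agent a under demand vector v.\<close>
definition satisfies_demand :: "nat \<Rightarrow> nat \<Rightarrow> (nat \<Rightarrow> (nat \<Rightarrow> nat) \<Rightarrow> nat) \<Rightarrow> bool" where
  "satisfies_demand n k f \<longleftrightarrow>
     (\<forall>v. demand_vec n k v \<longrightarrow>
        (\<forall>a\<in>{1..n}. f a v \<in> {1..k}) \<and>
        (\<forall>j\<in>{1..k}. card {a\<in>{1..n}. f a v = j} = v j))"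

definition switching_cost :: "nat \<Rightarrow> (nat \<Rightarrow> (nat \<Rightarrow> nat) \<Rightarrow> nat) \<Rightarrow> (nat \<Rightarrow> nat) \<Rightarrow> (nat \<Rightarrow> nat) \<Rightarrow> nat" where
  "switching_cost n f v w = card {a\<in>{1..n}. f a v \<noteq> f a w}"

definition adjacent :: "nat \<Rightarrow> (nat \<Rightarrow> nat) \<Rightarrow> (nat \<Rightarrow> nat) \<Rightarrow> bool" where
  "adjacent k v w \<longleftrightarrow> (\<Sum>j\<in>{1..k}. (if v j \<le> w j then w j - v j else v j - w j)) = 2"

definition max_switching_cost_le :: "nat \<Rightarrow> nat \<Rightarrow> (nat \<Rightarrow> (nat \<Rightarrow> nat) \<Rightarrow> nat) \<Rightarrow> nat \<Rightarrow> bool" where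
  "max_switching_cost_le n k f c \<longleftrightarrow>
     (\<forall>v w. demand_vec n k v \<and> demand_vec n k w \<and> adjacent k v w \<longrightarrow> switching_cost n f v w \<le> c)"

definition st_adjacent :: "nat \<Rightarrow> nat \<Rightarrow> (nat \<Rightarrow> nat) \<Rightarrow> (nat \<Rightarrow> nat) \<Rightarrow> nat \<Rightarrow> nat \<Rightarrow> bool" where
  "st_adjacent n k v w s t \<longleftrightarrow> demand_vec n k v \<and> demand_vec n k w \<and>
     s \<in> {1..k} \<and> t \<in> {1..k} \<and> s \<noteq> t \<and> v s \<ge> 1 \<and>
     w = v(s := v s - 1, t := v t + 1)"

definition mobile :: "(nat \<Rightarrow> (nat \<Rightarrow> nat) \<Rightarrow> nat) \<Rightarrow> nat \<Rightarrow> (nat \<Rightarrow> nat) \<Rightarrow> (nat \<Rightarrow> nat) \<Rightarrow> nat \<Rightarrow> nat \<Rightarrow> bool" where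
  "mobile f a v w i j \<longleftrightarrow> f a v = i \<and> f a w = j \<and> i \<noteq> j"

definition intermediate_task :: "nat \<Rightarrow> nat \<Rightarrow> (nat \<Rightarrow> (nat \<Rightarrow> nat) \<Rightarrow> nat) \<Rightarrow> (nat \<Rightarrow> nat) \<Rightarrow> (nat \<Rightarrow> nat) \<Rightarrow> nat \<Rightarrow> nat \<Rightarrow> nat \<Rightarrow> bool" where
  "intermediate_task n k f v w s t i \<longleftrightarrow> st_adjacent n k v w s t \<and> switching_cost n f v w = 2 \<and>
     i \<in> {1..k} \<and> i \<notin> {s, t} \<and>
     (\<exists>a\<in>{1..n}. \<exists>b\<in>{1..n}. a \<noteq> b \<and> mobile f a v w s i \<and> mobile f b v w i t)"

end

theory Submission
  imports Defs
begin

lemma card2_eq: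
  assumes "finite D" "card D = 2" "x \<in> D" "y \<in> D" "x \<noteq> y"
  shows "D = {x, y}"
proof -
  have "{x,y} \<subseteq> D" using assms by auto
  moreover have "card {x,y} = card D" using assms by auto
  ultimately show ?thesis using assms(1) card_subset_eq by metis
qed

theorem lemma4p6:
  fixes n k :: nat and f :: "nat \<Rightarrow> (nat \<Rightarrow> nat) \<Rightarrow> nat"
    and v v1 v2 :: "nat \<Rightarrow> nat" and s t1 t2 i1 i2 :: nat
  assumes "n \<ge> 4" and "k \<ge> 5"
    and "satisfies_demand n k f"
    and "max_switching_cost_le n k f 2"
    and "demand_vec n k v"
    and "st_adjacent n k v v1 s t1" and "switching_cost n f v v1 = 2"
    and "intermediate_task n k f v v1 s t1 i1"
    and "st_adjacent n k v v2 s t2" and "switching_cost n f v v2 = 2"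
    and "intermediate_task n k f v v2 s t2 i2"
  shows "\<not> distinct [s, i1, t1, i2, t2]"
proof
  assume dist: "distinct [s, i1, t1, i2, t2]"
  obtain a1 b1 where ab1: "a1 \<in> {1..n}" "b1 \<in> {1..n}" "a1 \<noteq> b1"
    "mobile f a1 v v1 s i1" "mobile f b1 v v1 i1 t1"
    using assms(8) unfolding intermediate_task_def by blast
  obtain a2 b2 where ab2: "a2 \<in> {1..n}" "b2 \<in> {1..n}" "a2 \<noteq> b2"
    "mobile f a2 v v2 s i2" "mobile f b2 v v2 i2 t2"
    using assms(11) unfolding intermediate_task_def by blast
  have D1: "{a\<in>{1..n}. f a v \<noteq> f a v1} = {a1, b1}"
    proof (rule card2_eq)
    show "finite {a\<in>{1..n}. f a v \<noteq> f a v1}" by simp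
    show "card {a\<in>{1..n}. f a v \<noteq> f a v1} = 2" using assms(7) unfolding switching_cost_def .
    show "a1 \<in> {a\<in>{1..n}. f a v \<noteq> f a v1}" using ab1(1,4) unfolding mobile_def by simp
    show "b1 \<in> {a\<in>{1..n}. f a v \<noteq> f a v1}" using ab1(2,5) unfolding mobile_def by simp
    show "a1 \<noteq> b1" using ab1(3) .
  qed
  have D2: "{a\<in>{1..n}. f a v \<noteq> f a v2} = {a2, b2}"
    proof (rule card2_eq)
    show "finite {a\<in>{1..n}. f a v \<noteq> f a v2}" by simp
    show "card {a\<in>{1..n}. f a v \<noteq> f a v2} = 2" using assms(10) unfolding switching_cost_def .
    show "a2 \<in> {a\<in>{1..n}. f a v \<noteq> f a v2}" using ab2(1,4) unfolding mobile_def by simp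
    show "b2 \<in> {a\<in>{1..n}. f a v \<noteq> f a v2}" using ab2(2,5) unfolding mobile_def by simp
    show "a2 \<noteq> b2" using ab2(3) .
  qed
  have same1: "f a v1 = f a v" if "a \<in> {1..n}" "a \<notin> {a1,b1}" for a
  proof (rule ccontr)
    assume "f a v1 \<noteq> f a v"
    hence "a \<in> {a\<in>{1..n}. f a v \<noteq> f a v1}" using that(1) by simp
    hence "a \<in> {a1, b1}" by (simp only: D1)
    thus False using that(2) by simp
  qed
  have same2: "f a v2 = f a v" if "a \<in> {1..n}" "a \<notin> {a2,b2}" for a
  proof (rule ccontr)
    assume "f a v2 \<noteq> f a v"
    hence "a \<in> {a\<in>{1..n}. f a v \<noteq> f a v2}" using that(1) by simp
    hence "a \<in> {a2, b2}" by (simp only: D2)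
    thus False using that(2) by simp
  qed
  have fv: "f a1 v = s" "f a1 v1 = i1" "f b1 v = i1" "f b1 v1 = t1"
       "f a2 v = s" "f a2 v2 = i2" "f b2 v = i2" "f b2 v2 = t2"
    using ab1 ab2 by (auto simp: mobile_def)
  have b1n: "b1 \<notin> {a2,b2}" using fv dist by auto
  have b2n: "b2 \<notin> {a1,b1}" using fv dist by auto
  have a1b2: "a1 \<noteq> b2" using fv dist by auto
  have "f b1 v2 = i1" using same2[OF ab1(2) b1n] fv by simp
  hence d1: "f b1 v1 \<noteq> f b1 v2" using fv dist by auto
  have "f b2 v1 = i2" using same1[OF ab2(2) b2n] fv by simp
  hence d2: "f b2 v1 \<noteq> f b2 v2" using fv dist by auto
  have d3: "f a1 v1 \<noteq> f a1 v2"
  proof (cases "a1 = a2")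
    case True then show ?thesis using fv dist by auto
  next
    case False
    hence "a1 \<notin> {a2,b2}" using a1b2 by auto
    hence "f a1 v2 = s" using same2[OF ab1(1)] fv by simp
    then show ?thesis using fv dist by auto
  qed
  have b1b2: "b1 \<noteq> b2" using b1n by auto
  have a1b1: "a1 \<noteq> b1" by fact
  have sub: "{a1, b1, b2} \<subseteq> {a\<in>{1..n}. f a v1 \<noteq> f a v2}"
    using d1 d2 d3 ab1 ab2 by auto
  have "3 \<le> card {a\<in>{1..n}. f a v1 \<noteq> f a v2}"
  proof -
    have "card {a1, b1, b2} = 3" using a1b1 a1b2 b1b2 by auto
    thus ?thesis using card_mono[OF _ sub] by fastforce
  qed
  moreover have "switching_cost n f v1 v2 \<le> 2"
  proof -
    have dv1: "demand_vec n k v1" and dv2: "demand_vec n k v2"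
      using assms(6,9) by (auto simp: st_adjacent_def)
    have v1: "v1 = v(s := v s - 1, t1 := v t1 + 1)" and v2: "v2 = v(s := v s - 1, t2 := v t2 + 1)"
      and t1k: "t1 \<in> {1..k}" and t2k: "t2 \<in> {1..k}"
      using assms(6,9) by (auto simp: st_adjacent_def)
    have "\<And>j. (if v1 j \<le> v2 j then v2 j - v1 j else v1 j - v2 j) = (if j \<in> {t1,t2} then 1 else 0)"
    proof -
      fix j
      show "(if v1 j \<le> v2 j then v2 j - v1 j else v1 j - v2 j) = (if j \<in> {t1,t2} then 1 else 0)"
      proof (cases "j = t1")
        case True have "t1 \<noteq> s" "t1 \<noteq> t2" using dist by auto
        thus ?thesis using True by (simp add: v1 v2)
      next
        case n1: False show ?thesis
        proof (cases "j = t2")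
          case True have "t2 \<noteq> s" "t1 \<noteq> t2" using dist by auto
          thus ?thesis using True n1 by (simp add: v1 v2)
        next
          case False thus ?thesis using n1 by (simp add: v1 v2)
        qed
      qed
    qed
    hence "(\<Sum>j\<in>{1..k}. (if v1 j \<le> v2 j then v2 j - v1 j else v1 j - v2 j))
        = (\<Sum>j\<in>{1..k}. (if j \<in> {t1,t2} then 1 else 0))" by simp
    also have "\<dots> = card ({1..k} \<inter> {t1,t2})" by (simp add: sum.If_cases, rule arg_cong[where f=card], auto)
    also have "{1..k} \<inter> {t1,t2} = {t1,t2}" using t1k t2k by auto
    also have "card {t1,t2} = 2" using dist by auto
    finally have "adjacent k v1 v2" by (simp add: adjacent_def)
    thus ?thesis using assms(4) dv1 dv2 unfolding max_switching_cost_le_def by blast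
  qed
  ultimately show False unfolding switching_cost_def by linarith
qed

end
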